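(* In the Prox-SDCA procedure described in the context, with $\Delta\alpha_i$ chosen by Option I, assume each $\phi_i^*$ is $\gamma$-strongly convex with respect to $\|\cdot\|_D$ (where $\gamma\ge0$ may be zero). For each $t$ and $i$ let $u_i^{(t-1)}$ be any vector with $-u^{(t-1)}_i \in \partial \phi_i(X_i^\top w^{(t-1)})$. Then for any iteration $t$ and any $s \in [0,1]$, \[ \mathbb{E}[D(\alpha^{(t)})-D(\alpha^{(t-1)})] \ge \frac{s}{n}\, \mathbb{E}[P(w^{(t-1)})-D(\alpha^{(t-1)})] - \left(\frac{s}{n}\right)^2 \frac{G^{(t)}}{2\lambda}, \] where \[ G^{(t)} = \frac{1}{n} \sum_{i=1}^n \left(\|X_i\|^2 - \frac{\gamma(1-s)\lambda n}{s}\right) \mathbb{E} \left[\|u^{(t-1)}_i-\alpha^{(t-1)}_i\|_D^2\right]. \]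
   Context: Let $X_1,\dots,X_n\in\mathbb{R}^{d\times k}$, $\phi_1,\dots,\phi_n:\mathbb{R}^k\to\mathbb{R}$ convex, $g:\mathbb{R}^d\to\mathbb{R}$ convex, $\lambda>0$, $P(w)=\frac1n\sum_i\phi_i(X_i^\top w)+\lambda g(w)$, and for $\alpha\in\mathbb{R}^{k\times n}$ with columns $\alpha_i$, $D(\alpha)=\frac1n\sum_i-\phi_i^*(-\alpha_i)-\lambda g^*(\frac{1}{\lambda n}\sum_iX_i\alpha_i)$, where $f^*$ is the convex conjugate. $\|\cdot\|_P$ is a norm on $\mathbb{R}^k$ with dual norm $\|\cdot\|_D$; $g$ is $1$-strongly convex w.r.t. a norm $\|\cdot\|_{P'}$ on $\mathbb{R}^d$ with dual norm $\|\cdot\|_{D'}$, and $g^*$ is continuously differentiable. $\|X\|=\sup_{u\ne0}\|Xu\|_{D'}/\|u\|_D$. A function $f$ is $\gamma$-strongly convex w.r.t. $\|\cdot\|_D$ if $f(su+(1-s)v)\le sf(u)+(1-s)f(v)-\frac{\gamma s(1-s)}2\|u-v\|_D^2$ for $s\in[0,1]$. Procedure Prox-SDCA with Option I: $\alpha^{(0)}=0$, $v^{(0)}=0$, $w^{(0)}=\nabla g^*(0)$; at iteration $t$ pick $i\in\{1,\dots,n\}$ uniformly at random, let $\Delta\alpha_i\in\arg\max_\Delta\big[-\phi_i^*(-(\alpha_i^{(t-1)}+\Delta))-w^{(t-1)\top}X_i\Delta-\frac{1}{2\lambda n}\|X_i\Delta\|_{D'}^2\big]$, set $\alpha_i^{(t)}=\alpha_i^{(t-1)}+\Delta\alpha_i$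 (other columns unchanged), $v^{(t)}=v^{(t-1)}+(\lambda n)^{-1}X_i\Delta\alpha_i$, $w^{(t)}=\nabla g^*(v^{(t)})$. Expectations are over the random choices of the procedure. *)

theory Defs
  imports "HOL-Analysis.Analysis" "HOL-Library.Extended_Real"
begin

definition is_norm :: "('a::real_vector \<Rightarrow> real) \<Rightarrow> bool" where
  "is_norm N \<longleftrightarrow> (\<forall>x. N x \<ge> 0) \<and> (\<forall>x. N x = 0 \<longleftrightarrow> x = 0)
     \<and> (\<forall>c x. N (c *\<^sub>R x) = \<bar>c\<bar> * N x) \<and> (\<forall>x y. N (x + y) \<le> N x + N y)"

definition dual_norm :: "('a::real_inner \<Rightarrow> real) \<Rightarrow> 'a \<Rightarrow> real" where
  "dual_norm N y = Sup {x \<bullet> y | x. N x \<le> 1}"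

definition conj :: "('a::real_inner \<Rightarrow> real) \<Rightarrow> 'a \<Rightarrow> ereal" where
  "conj f y = (SUP x. ereal (x \<bullet> y - f x))"

definition strongly_convex_wrt :: "('a::real_vector \<Rightarrow> real) \<Rightarrow> real \<Rightarrow> ('a \<Rightarrow> ereal) \<Rightarrow> bool" where
  "strongly_convex_wrt N \<gamma> f \<longleftrightarrow> (\<forall>u v s. 0 \<le> s \<and> s \<le> 1 \<longrightarrow>
     f (s *\<^sub>R u + (1 - s) *\<^sub>R v) \<le> ereal s * f u + ereal (1 - s) * f v
        - ereal (\<gamma> * s * (1 - s) / 2 * (N (u - v))\<^sup>2))"

definition subdiff :: "('a::real_inner \<Rightarrow> real) \<Rightarrow> 'a \<Rightarrow> 'a set" where
  "subdiff f x = {z. \<forall>y. f y \<ge> f x + z \<bullet> (y - x)}"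

definition op_norm :: "(real^'k \<Rightarrow> real) \<Rightarrow> (real^'d \<Rightarrow> real) \<Rightarrow> real^'k^'d \<Rightarrow> real" where
  "op_norm ND ND' X = Sup {ND' (X *v u) / ND u | u. u \<noteq> 0}"

definition primal :: "nat \<Rightarrow> real \<Rightarrow> (nat \<Rightarrow> real^'k \<Rightarrow> real) \<Rightarrow> (real^'d \<Rightarrow> real)
     \<Rightarrow> (nat \<Rightarrow> real^'k^'d) \<Rightarrow> real^'d \<Rightarrow> real" where
  "primal n lam \<phi> g X w = (1 / real n) * (\<Sum>i<n. \<phi> i (transpose (X i) *v w)) + lam * g w"

text \<open>Dual objective D(alpha); columns alpha_i are indexed by i < n (0-based).\<close>
definition dual :: "nat \<Rightarrow> real \<Rightarrow> (nat \<Rightarrow> real^'k \<Rightarrow> real) \<Rightarrow> (real^'d \<Rightarrow> real)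
     \<Rightarrow> (nat \<Rightarrow> real^'k^'d) \<Rightarrow> (nat \<Rightarrow> real^'k) \<Rightarrow> ereal" where
  "dual n lam \<phi> g X \<alpha> = ereal (1 / real n) * (\<Sum>i<n. - conj (\<phi> i) (- \<alpha> i))
     - ereal lam * conj g ((1 / (lam * real n)) *\<^sub>R (\<Sum>i<n. X i *v \<alpha> i))"

text \<open>Index histories of length m with entries in {0..<n} (the random choices of
  the first m iterations), and expectation = uniform average over them.\<close>
definition hists :: "nat \<Rightarrow> nat \<Rightarrow> nat list set" where
  "hists n m = {h. set h \<subseteq> {..<n} \<and> length h = m}"

definition expect :: "nat \<Rightarrow> nat \<Rightarrow> (nat list \<Rightarrow> real) \<Rightarrow> real" where
  "expect n m f = (\<Sum>h\<in>hists n m. f h) / real n ^ m"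

definition expect_e :: "nat \<Rightarrow> nat \<Rightarrow> (nat list \<Rightarrow> ereal) \<Rightarrow> ereal" where
  "expect_e n m f = ereal (1 / real n ^ m) * (\<Sum>h\<in>hists n m. f h)"

end

theory Submission
  imports Defs
begin


lemma is_normD:
  assumes "is_norm N"
  shows "N x \<ge> 0" "N x = 0 \<longleftrightarrow> x = 0" "N (c *\<^sub>R x) = \<bar>c\<bar> * N x" "N (x + y) \<le> N x + N y"
  using assms unfolding is_norm_def by auto

lemma norm_zero': "is_norm N \<Longrightarrow> N 0 = 0" using is_normD(2) by blast

lemma norm_minus': "is_norm N \<Longrightarrow> N (- x) = N x"
  using is_normD(3)[of N "-1" x] by simp

lemma norm_sum':
  assumes "is_norm N" "finite A"
  shows "N (\<Sum>a\<in>A. f a) \<le> (\<Sum>a\<in>A. N (f a))"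
  using assms(2)
proof (induction A rule: finite_induct)
  case empty then show ?case using norm_zero'[OF assms(1)] by simp
next
  case (insert a A)
  then show ?case using is_normD(4)[OF assms(1), of "f a" "sum f A"] by simp
qed

lemma norm_upper':
  fixes N :: "'a::euclidean_space \<Rightarrow> real"
  assumes "is_norm N"
  shows "\<exists>C>0. \<forall>x. N x \<le> C * norm x"
proof -
  define C where "C = (\<Sum>b\<in>Basis. N b) + 1"
  have C0: "(\<Sum>b\<in>Basis. N b) \<ge> 0" using is_normD(1)[OF assms] by (simp add: sum_nonneg)
  have "N x \<le> C * norm x" for x
  proof -
    have "N x = N (\<Sum>b\<in>Basis. (x \<bullet> b) *\<^sub>R b)" by (simp add: euclidean_representation)
    also have "\<dots> \<le> (\<Sum>b\<in>Basis. N ((x \<bullet> b) *\<^sub>R b))" by (rule norm_sum'[OF assms]) simp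
    also have "\<dots> = (\<Sum>b\<in>Basis. \<bar>x \<bullet> b\<bar> * N b)" using is_normD(3)[OF assms] by simp
    also have "\<dots> \<le> (\<Sum>b\<in>Basis. norm x * N b)"
      by (rule sum_mono) (metis Basis_le_norm is_normD(1)[OF assms] mult_right_mono)
    also have "\<dots> = norm x * (\<Sum>b\<in>Basis. N b)" by (simp add: sum_distrib_left)
    also have "\<dots> \<le> C * norm x" unfolding C_def by (simp add: algebra_simps)
    finally show ?thesis .
  qed
  moreover have "C > 0" using C0 unfolding C_def by simp
  ultimately show ?thesis by blast
qed

lemma norm_cont':
  fixes N :: "'a::euclidean_space \<Rightarrow> real"
  assumes "is_norm N"
  shows "continuous_on UNIV N"
proof -
  obtain C where C: "C > 0" "\<And>x. N x \<le> C * norm x" using norm_upper'[OF assms] by blast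
  have lip: "\<bar>N x - N y\<bar> \<le> C * norm (x - y)" for x y
  proof -
    have "N x \<le> N y + N (x - y)" using is_normD(4)[OF assms, of y "x - y"] by simp
    moreover have "N y \<le> N x + N (y - x)" using is_normD(4)[OF assms, of x "y - x"] by simp
    moreover have "N (y - x) = N (x - y)" using norm_minus'[OF assms, of "x - y"] by simp
    ultimately show ?thesis using C(2)[of "x - y"] by linarith
  qed
  show ?thesis unfolding continuous_on_iff
  proof (intro ballI allI impI)
    fix x and e :: real assume "e > 0"
    show "\<exists>d>0. \<forall>x'\<in>UNIV. dist x' x < d \<longrightarrow> dist (N x') (N x) < e"
    proof (intro exI[of _ "e / C"] conjI ballI impI)
      show "e / C > 0" using \<open>e>0\<close> C by simp
      fix x' assume "dist x' x < e / C"
      then have "C * norm (x' - x) < e" using C by (simp add: dist_norm field_simps)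
      then show "dist (N x') (N x) < e" using lip[of x' x] by (simp add: dist_real_def)
    qed
  qed
qed

lemma norm_lower':
  fixes N :: "'a::euclidean_space \<Rightarrow> real"
  assumes "is_norm N"
  shows "\<exists>c>0. \<forall>x. c * norm x \<le> N x"
proof -
  have ne: "sphere (0::'a) 1 \<noteq> {}"
    by (simp add: sphere_eq_empty)
  obtain x0 where x0: "x0 \<in> sphere 0 1" "\<And>y. y \<in> sphere 0 1 \<Longrightarrow> N x0 \<le> N y"
    using continuous_attains_inf[OF compact_sphere ne continuous_on_subset[OF norm_cont'[OF assms]]] by auto
  have "x0 \<noteq> 0" using x0(1) by auto
  then have c: "N x0 > 0" using is_normD(1,2)[OF assms, of x0] by auto
  have "N x0 * norm x \<le> N x" for x
  proof (cases "x = 0")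
    case True then show ?thesis by (simp add: norm_zero'[OF assms])
  next
    case False
    have "N x0 \<le> N ((1 / norm x) *\<^sub>R x)" using x0(2) False by simp
    also have "\<dots> = N x / norm x" using is_normD(3)[OF assms] by simp
    finally show ?thesis using False by (simp add: field_simps)
  qed
  with c show ?thesis by blast
qed



lemma dual_bdd:
  fixes N :: "'a::euclidean_space \<Rightarrow> real"
  assumes "is_norm N"
  shows "bdd_above {x \<bullet> y | x. N x \<le> 1}" "\<exists>C. \<forall>y. dual_norm N y \<le> C * norm y"
proof -
  obtain c where c: "c > 0" "\<And>x. c * norm x \<le> N x" using norm_lower'[OF assms] by blast
  have bd: "x \<bullet> y \<le> norm y / c" if "N x \<le> 1" for x y
  proof -
    have "norm x \<le> 1 / c" using c(2)[of x] that c(1) by (simp add: field_simps)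
    then have "norm x * norm y \<le> norm y / c" using mult_right_mono[of "norm x" "1/c" "norm y"] by simp
    then show ?thesis using norm_cauchy_schwarz[of x y] by linarith
  qed
  show "bdd_above {x \<bullet> y | x. N x \<le> 1}" for y
    unfolding bdd_above_def using bd by blast
  have "dual_norm N y \<le> (1 / c) * norm y" for y
    unfolding dual_norm_def
  proof (rule cSup_least)
    have "0 \<bullet> y \<in> {x \<bullet> y |x. N x \<le> 1}" using norm_zero'[OF assms(1)] by fastforce
    then show "{x \<bullet> y |x. N x \<le> 1} \<noteq> {}" by blast
  qed (use bd in auto)
  then show "\<exists>C. \<forall>y. dual_norm N y \<le> C * norm y" by blast
qed

lemma dual_upper:
  fixes N :: "'a::euclidean_space \<Rightarrow> real"
  assumes "is_norm N" "N x \<le> 1"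
  shows "x \<bullet> y \<le> dual_norm N y"
  unfolding dual_norm_def by (rule cSup_upper) (use assms dual_bdd(1)[OF assms(1)] in auto)

lemma dual_least:
  fixes N :: "'a::euclidean_space \<Rightarrow> real"
  assumes "is_norm N" "\<And>x. N x \<le> 1 \<Longrightarrow> x \<bullet> y \<le> b"
  shows "dual_norm N y \<le> b"
  unfolding dual_norm_def
proof (rule cSup_least)
  have "0 \<bullet> y \<in> {x \<bullet> y |x. N x \<le> 1}" using norm_zero'[OF assms(1)] by fastforce
  then show "{x \<bullet> y |x. N x \<le> 1} \<noteq> {}" by blast
qed (use assms in blast)

lemma dual_nonneg:
  fixes N :: "'a::euclidean_space \<Rightarrow> real"
  assumes "is_norm N" shows "dual_norm N y \<ge> 0"
  using dual_upper[OF assms, of 0 y] norm_zero'[OF assms] by simp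

lemma dual_holder:
  fixes N :: "'a::euclidean_space \<Rightarrow> real"
  assumes "is_norm N" shows "z \<bullet> y \<le> N z * dual_norm N y"
proof (cases "z = 0")
  case True then show ?thesis by (simp add: norm_zero'[OF assms])
next
  case False
  then have p: "N z > 0" using is_normD(1,2)[OF assms, of z] by auto
  have "N ((1 / N z) *\<^sub>R z) \<le> 1" using is_normD(3)[OF assms] p by simp
  from dual_upper[OF assms this, of y] have "(z \<bullet> y) / N z \<le> dual_norm N y" by simp
  then show ?thesis using p by (simp add: field_simps)
qed

lemma dual_scale:
  fixes N :: "'a::euclidean_space \<Rightarrow> real"
  assumes "is_norm N" "c \<ge> 0" shows "dual_norm N (c *\<^sub>R y) = c * dual_norm N y"
proof -
  have le: "dual_norm N (c *\<^sub>R y) \<le> c * dual_norm N y" if "c \<ge> 0" for c y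
    by (rule dual_least[OF assms(1)]) (use dual_upper[OF assms(1)] that in \<open>simp add: mult_left_mono\<close>)
  show ?thesis
  proof (cases "c = 0")
    case True then show ?thesis using le[of 0 y] dual_nonneg[OF assms(1), of 0] by simp
  next
    case False
    then have "dual_norm N y \<le> (1/c) * dual_norm N (c *\<^sub>R y)" using le[of "1/c" "c *\<^sub>R y"] assms(2) by simp
    then have "c * dual_norm N y \<le> dual_norm N (c *\<^sub>R y)" using False assms(2) by (simp add: field_simps)
    then show ?thesis using le[OF assms(2), of y] by simp
  qed
qed

lemma dual_minus:
  fixes N :: "'a::euclidean_space \<Rightarrow> real"
  assumes "is_norm N" shows "dual_norm N (- y) = dual_norm N y"
proof -
  have le: "dual_norm N (- y) \<le> dual_norm N y" for y
  proof (rule dual_least[OF assms(1)])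
    fix x assume "N x \<le> 1"
    then have "N (- x) \<le> 1" using norm_minus'[OF assms] by simp
    from dual_upper[OF assms this, of y] show "x \<bullet> - y \<le> dual_norm N y" by simp
  qed
  show ?thesis using le[of y] le[of "-y"] by simp
qed

lemma dual_zero:
  fixes N :: "'a::euclidean_space \<Rightarrow> real"
  assumes "is_norm N" shows "dual_norm N 0 = 0"
  using dual_scale[OF assms, of 0 0] by simp

lemma dual_lower:
  fixes N :: "'a::euclidean_space \<Rightarrow> real"
  assumes "is_norm N" shows "\<exists>c>0. \<forall>y. c * norm y \<le> dual_norm N y"
proof -
  obtain C where C: "C > 0" "\<And>x. N x \<le> C * norm x" using norm_upper'[OF assms] by blast
  have "(1 / C) * norm y \<le> dual_norm N y" for y
  proof (cases "y = 0")
    case True then show ?thesis by (simp add: dual_zero[OF assms])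
  next
    case False
    have "y \<bullet> y \<le> N y * dual_norm N y" by (rule dual_holder[OF assms])
    also have "\<dots> \<le> C * norm y * dual_norm N y"
      using C(2)[of y] dual_nonneg[OF assms] by (simp add: mult_right_mono)
    finally have "norm y * norm y \<le> C * norm y * dual_norm N y" by (simp add: power2_norm_eq_inner[symmetric] power2_eq_square)
    then have "norm y \<le> C * dual_norm N y" using False by (simp add: mult.assoc)
    then show ?thesis using C(1) by (simp add: field_simps)
  qed
  moreover have "1 / C > 0" using C by simp
  ultimately show ?thesis by blast
qed

lemma dual_is_norm_pos:
  fixes N :: "'a::euclidean_space \<Rightarrow> real"
  assumes "is_norm N" "y \<noteq> 0" shows "dual_norm N y > 0"
  using dual_lower[OF assms(1)] assms(2) by (meson order.strict_trans2 mult_pos_pos zero_less_norm_iff)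



lemma conj_ge: "ereal (x \<bullet> y - f x) \<le> conj f y"
  unfolding conj_def by (rule SUP_upper) simp

lemma conj_not_minf: "conj f y \<noteq> -\<infinity>"
  using conj_ge[of 0 y f] by auto

lemma conj_subdiff:
  assumes "z \<in> subdiff f a" shows "conj f z = ereal (a \<bullet> z - f a)"
proof (rule antisym)
  show "conj f z \<le> ereal (a \<bullet> z - f a)" unfolding conj_def
  proof (rule SUP_least)
    fix x
    have "f x \<ge> f a + z \<bullet> (x - a)" using assms unfolding subdiff_def by blast
    moreover have "z \<bullet> (x - a) = x \<bullet> z - a \<bullet> z" by (simp add: inner_diff_right inner_commute)
    ultimately show "ereal (x \<bullet> z - f x) \<le> ereal (a \<bullet> z - f a)" by simp
  qed
qed (rule conj_ge)

lemma strong_real: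
  assumes "strongly_convex_wrt N \<gamma> (\<lambda>x. ereal (g x))" "0 \<le> s" "s \<le> 1"
  shows "g (s *\<^sub>R x + (1 - s) *\<^sub>R y) \<le> s * g x + (1 - s) * g y - \<gamma> * s * (1 - s) / 2 * (N (x - y))\<^sup>2"
proof -
  have "ereal (g (s *\<^sub>R x + (1 - s) *\<^sub>R y)) \<le> ereal s * ereal (g x) + ereal (1 - s) * ereal (g y)
        - ereal (\<gamma> * s * (1 - s) / 2 * (N (x - y))\<^sup>2)"
    using assms unfolding strongly_convex_wrt_def by blast
  then show ?thesis by simp
qed

lemma g_facts:
  fixes g :: "'a::euclidean_space \<Rightarrow> real" and N :: "'a \<Rightarrow> real"
  assumes nN: "is_norm N" and gc: "convex_on UNIV g"
    and gs: "strongly_convex_wrt N 1 (\<lambda>x. ereal (g x))"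
    and fin: "\<And>y. conj g y \<noteq> \<infinity>"
    and der: "((\<lambda>z. real_of_ereal (conj g z)) has_derivative (\<lambda>h. w \<bullet> h)) (at v)"
  shows "real_of_ereal (conj g v) = w \<bullet> v - g w"
    "\<And>\<delta>. real_of_ereal (conj g (v + \<delta>)) \<le> real_of_ereal (conj g v) + w \<bullet> \<delta> + (dual_norm N \<delta>)\<^sup>2 / 2"
proof -
  define G where "G y = real_of_ereal (conj g y)" for y
  have cG: "conj g y = ereal (G y)" for y
    using fin[of y] conj_not_minf[of g y] unfolding G_def by (cases "conj g y") auto
  have FY: "x \<bullet> y - g x \<le> G y" for x y using conj_ge[of x y g] cG[of y] by simp
  define h where "h x = g x - x \<bullet> v" for x
  define m where "m = - G v"
  have hm: "h x \<ge> m" for x using FY[of x v] unfolding h_def m_def by simp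
  have near: "\<exists>x. h x < m + e" if "e > 0" for e
  proof (rule ccontr)
    assume "\<not> ?thesis"
    then have "\<forall>x. x \<bullet> v - g x \<le> G v - e" unfolding h_def m_def by (smt (verit))
    then have "conj g v \<le> ereal (G v - e)" unfolding conj_def by (intro SUP_least) simp
    then show False using cG[of v] that by simp
  qed
  have gcont: "continuous_on UNIV g" using convex_on_continuous[OF open_UNIV gc] .
  have hcont: "isCont h x" for x
    unfolding h_def using gcont by (intro continuous_intros) (simp add: continuous_on_eq_continuous_at)
  from der have derG: "\<forall>e>0. \<exists>d>0. \<forall>y. norm (y - v) < d \<longrightarrow> norm (G y - G v - w \<bullet> (y - v)) \<le> e * norm (y - v)"
    unfolding has_derivative_at_alt G_def by blast
  have hw: "h w \<le> m"
  proof (rule ccontr)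
    assume "\<not> h w \<le> m"
    define \<tau> where "\<tau> = (h w - m) / 2"
    have tau: "\<tau> > 0" using \<open>\<not> h w \<le> m\<close> unfolding \<tau>_def by simp
    obtain \<eta>0 where eta0: "\<eta>0 > 0" "\<And>x. dist x w < \<eta>0 \<Longrightarrow> dist (h x) (h w) < \<tau>"
      using hcont[of w] tau unfolding continuous_at_eps_delta by blast
    define \<eta> where "\<eta> = \<eta>0 / 4"
    have eta: "\<eta> > 0" using eta0 unfolding \<eta>_def by simp
    obtain r where r: "r > 0" "\<And>y. norm (y - v) < r \<Longrightarrow> norm (G y - G v - w \<bullet> (y - v)) \<le> \<eta> * norm (y - v)"
      using derG eta by blast
    define r' where "r' = r / 2"
    have r': "r' > 0" "r' < r" using r unfolding r'_def by auto
    define \<epsilon> where "\<epsilon> = \<eta> * r'"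
    have eps: "\<epsilon> > 0" using eta r' unfolding \<epsilon>_def by simp
    obtain x where x: "h x < m + min \<epsilon> \<tau>" using near[of "min \<epsilon> \<tau>"] eps tau by auto
    have close: "norm (x - w) < \<eta>0"
    proof (cases "x = w")
      case True then show ?thesis using eta0 by simp
    next
      case False
      define \<delta> where "\<delta> = (r' / norm (x - w)) *\<^sub>R (x - w)"
      have nd: "norm \<delta> = r'" using False r' unfolding \<delta>_def by simp
      have xd: "(x - w) \<bullet> \<delta> = r' * norm (x - w)"
        using False unfolding \<delta>_def by (simp add: power2_norm_eq_inner[symmetric] power2_eq_square)
      have "G (v + \<delta>) \<ge> x \<bullet> (v + \<delta>) - g x" by (rule FY)
      also have "x \<bullet> (v + \<delta>) - g x = - h x + x \<bullet> \<delta>" unfolding h_def by (simp add: inner_add_right)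
      finally have lo: "G (v + \<delta>) > G v - \<epsilon> + x \<bullet> \<delta>" using x unfolding m_def by linarith
      have "norm (G (v + \<delta>) - G v - w \<bullet> \<delta>) \<le> \<eta> * r'" using r(2)[of "v + \<delta>"] nd r' by simp
      then have up: "G (v + \<delta>) \<le> G v + w \<bullet> \<delta> + \<eta> * r'" by simp
      have "(x - w) \<bullet> \<delta> < 2 * \<eta> * r'" using lo up unfolding \<epsilon>_def by (simp add: inner_diff_left)
      then have "r' * norm (x - w) < r' * (2 * \<eta>)" using xd by (simp add: algebra_simps)
      then have "norm (x - w) < 2 * \<eta>" using r' by simp
      then show ?thesis using eta unfolding \<eta>_def by simp
    qed
    then have "dist (h x) (h w) < \<tau>" using eta0(2)[of x] by (simp add: dist_norm)
    then have "h w < h x + \<tau>" by (simp add: dist_real_def)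
    then have "h w < m + 2 * \<tau>" using x by simp
    then show False unfolding \<tau>_def by (simp add: field_simps)
  qed
  then have hw_eq: "h w = m" using hm[of w] by simp
  show "real_of_ereal (conj g v) = w \<bullet> v - g w"
    using hw_eq unfolding h_def m_def G_def by simp
  have quad: "h x \<ge> h w + (N (x - w))\<^sup>2 / 2" for x
  proof -
    define a where "a = h x - h w"
    define b where "b = (N (x - w))\<^sup>2 / 2"
    have a0: "a \<ge> 0" using hm[of x] hw_eq unfolding a_def by simp
    have key: "(1 - s) * b \<le> a" if "0 < s" "s < 1" for s
    proof -
      have "g (s *\<^sub>R x + (1 - s) *\<^sub>R w) \<le> s * g x + (1 - s) * g w - 1 * s * (1 - s) / 2 * (N (x - w))\<^sup>2"
        using strong_real[OF gs, of s x w] that by simp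
      moreover have "(s *\<^sub>R x + (1 - s) *\<^sub>R w) \<bullet> v = s * (x \<bullet> v) + (1 - s) * (w \<bullet> v)"
        by (simp add: inner_add_left)
      ultimately have "h (s *\<^sub>R x + (1 - s) *\<^sub>R w) \<le> s * h x + (1 - s) * h w - s * ((1 - s) * b)"
        unfolding h_def b_def by (simp add: algebra_simps)
      moreover have "h (s *\<^sub>R x + (1 - s) *\<^sub>R w) \<ge> h w" using hm hw_eq by simp
      ultimately have "s * ((1 - s) * b) \<le> s * a" unfolding a_def by (simp add: algebra_simps)
      then show ?thesis using that by simp
    qed
    have "b \<le> a"
    proof (rule ccontr)
      assume "\<not> b \<le> a"
      then have ba: "a < b" by simp
      define s where "s = (b - a) / (2 * b)"
      have b0: "b > 0" using a0 ba by simp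
      have s: "0 < s" "s < 1" using ba b0 a0 unfolding s_def by (auto simp: field_simps)
      have "(1 - s) * b = (a + b) / 2" using b0 unfolding s_def by (simp add: field_simps)
      then show False using key[OF s] ba by simp
    qed
    then show ?thesis unfolding a_def b_def by simp
  qed
  show "real_of_ereal (conj g (v + \<delta>)) \<le> real_of_ereal (conj g v) + w \<bullet> \<delta> + (dual_norm N \<delta>)\<^sup>2 / 2" for \<delta>
  proof -
    have "conj g (v + \<delta>) \<le> ereal (G v + w \<bullet> \<delta> + (dual_norm N \<delta>)\<^sup>2 / 2)"
      unfolding conj_def
    proof (rule SUP_least)
      fix x
      have e1: "x \<bullet> (v + \<delta>) - g x = - h x + w \<bullet> \<delta> + (x - w) \<bullet> \<delta>"
        unfolding h_def by (simp add: inner_add_right inner_diff_left)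
      have hol: "(x - w) \<bullet> \<delta> \<le> N (x - w) * dual_norm N \<delta>" by (rule dual_holder[OF nN])
      have amgm: "N (x - w) * dual_norm N \<delta> \<le> (N (x - w))\<^sup>2 / 2 + (dual_norm N \<delta>)\<^sup>2 / 2"
        using sum_squares_bound[of "N (x - w)" "dual_norm N \<delta>"] by (simp add: power2_eq_square)
      have "- h x \<le> G v - (N (x - w))\<^sup>2 / 2" using quad[of x] hw_eq unfolding m_def by simp
      then show "ereal (x \<bullet> (v + \<delta>) - g x) \<le> ereal (G v + w \<bullet> \<delta> + (dual_norm N \<delta>)\<^sup>2 / 2)"
        using e1 hol amgm by simp
    qed
    then have "G (v + \<delta>) \<le> G v + w \<bullet> \<delta> + (dual_norm N \<delta>)\<^sup>2 / 2" using cG[of "v + \<delta>"] by simp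
    then show ?thesis unfolding G_def .
  qed
qed



lemma op_norm_bound:
  fixes NP :: "real^'k \<Rightarrow> real" and NP' :: "real^'d \<Rightarrow> real" and X :: "real^'k^'d"
  assumes nP: "is_norm NP" and nP': "is_norm NP'"
  shows "dual_norm NP' (X *v z) \<le> op_norm (dual_norm NP) (dual_norm NP') X * dual_norm NP z"
    "op_norm (dual_norm NP) (dual_norm NP') X \<ge> 0"
proof -
  let ?S = "{dual_norm NP' (X *v u) / dual_norm NP u | u. u \<noteq> 0}"
  obtain C where C: "\<And>y. dual_norm NP' y \<le> C * norm y" using dual_bdd(2)[OF nP'] by blast
  obtain c where c: "c > 0" "\<And>y. c * norm y \<le> dual_norm NP y" using dual_lower[OF nP] by blast
  obtain B where B: "\<And>u. norm (X *v u) \<le> norm u * B" "B > 0"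
    using bounded_linear.pos_bounded[OF matrix_vector_mul_bounded_linear[of X]] by blast
  have C0: "C \<ge> 0"
  proof -
    have y: "(vec 1 :: real^'d) \<noteq> 0"
    proof
      assume "(vec 1 :: real^'d) = 0"
      then have "(vec 1 :: real^'d) $ undefined = 0 $ undefined" by simp
      then show False by simp
    qed
    then have "0 < dual_norm NP' (vec 1 :: real^'d)" by (rule dual_is_norm_pos[OF nP'])
    then have "0 < C * norm (vec 1 :: real^'d)" using C[of "vec 1"] by linarith
    then show ?thesis by (auto simp: zero_less_mult_iff)
  qed
  have bdd: "bdd_above ?S"
  proof -
    have "dual_norm NP' (X *v u) / dual_norm NP u \<le> C * B / c" if "u \<noteq> 0" for u
    proof -
      have p: "dual_norm NP u > 0" using dual_is_norm_pos[OF nP that] .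
      have "dual_norm NP' (X *v u) \<le> C * (norm u * B)" using C[of "X *v u"] mult_left_mono[OF B(1)[of u] C0]
        by linarith
      also have "\<dots> = (C * B / c) * (c * norm u)" using c by simp
      also have "\<dots> \<le> (C * B / c) * dual_norm NP u"
        by (rule mult_left_mono[OF c(2)]) (use B(2) C0 c(1) in simp)
      finally show ?thesis using p by (simp add: field_simps)
    qed
    then show ?thesis unfolding bdd_above_def by blast
  qed
  have u0: "(vec 1 :: real^'k) \<noteq> 0"
  proof
    assume "(vec 1 :: real^'k) = 0"
    then have "(vec 1 :: real^'k) $ undefined = 0 $ undefined" by simp
    then show False by simp
  qed
  define u0 where "u0 = (vec 1 :: real^'k)"
  have mem: "dual_norm NP' (X *v u0) / dual_norm NP u0 \<in> ?S" using u0 unfolding u0_def by blast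
  have nn: "0 \<le> dual_norm NP' (X *v u0) / dual_norm NP u0"
    using dual_nonneg[OF nP'] dual_nonneg[OF nP] by simp
  show op0: "op_norm (dual_norm NP) (dual_norm NP') X \<ge> 0"
    unfolding op_norm_def using cSup_upper[OF mem bdd] nn by linarith
  show "dual_norm NP' (X *v z) \<le> op_norm (dual_norm NP) (dual_norm NP') X * dual_norm NP z"
  proof (cases "z = 0")
    case True then show ?thesis using dual_zero[OF nP'] dual_zero[OF nP] by simp
  next
    case False
    have p: "dual_norm NP z > 0" using dual_is_norm_pos[OF nP False] .
    have "dual_norm NP' (X *v z) / dual_norm NP z \<le> op_norm (dual_norm NP) (dual_norm NP') X"
      unfolding op_norm_def by (rule cSup_upper[OF _ bdd]) (use False in blast)
    then show ?thesis using p by (simp add: field_simps)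
  qed
qed

lemma inner_transpose: "(transpose A *v (w::real^'d)) \<bullet> (u::real^'k) = w \<bullet> (A *v u)"
  by (simp add: inner_vec_def matrix_vector_mult_def vector_matrix_mult_def transpose_def sum_distrib_left sum_distrib_right mult.assoc mult.left_commute)
     (rule sum.swap)

lemma hists_Suc_sum:
  fixes f :: "nat list \<Rightarrow> 'b::comm_monoid_add"
  shows "(\<Sum>h\<in>hists n (Suc m). f h) = (\<Sum>h\<in>hists n m. \<Sum>i<n. f (h @ [i]))"
proof -
  have eq: "hists n (Suc m) = (\<lambda>(h, i). h @ [i]) ` (hists n m \<times> {..<n})"
  proof
    show "hists n (Suc m) \<subseteq> (\<lambda>(h, i). h @ [i]) ` (hists n m \<times> {..<n})"
    proof
      fix h assume h: "h \<in> hists n (Suc m)"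
      then have "h \<noteq> []" unfolding hists_def by auto
      then have "h = butlast h @ [last h]" by simp
      moreover have "butlast h \<in> hists n m" "last h < n"
        using h \<open>h \<noteq> []\<close> unfolding hists_def by (auto dest: in_set_butlastD) (metis last_in_set lessThan_iff subsetD)
      ultimately show "h \<in> (\<lambda>(h, i). h @ [i]) ` (hists n m \<times> {..<n})" by force
    qed
  qed (auto simp: hists_def)
  have inj: "inj_on (\<lambda>(h, i). h @ [i]) (hists n m \<times> {..<n})"
    by (auto simp: inj_on_def)
  have fin: "finite (hists n m)" unfolding hists_def using finite_lists_length_eq[of "{..<n}" m] by simp
  show ?thesis unfolding eq sum.reindex[OF inj] using fin
    by (simp add: sum.cartesian_product case_prod_unfold)
qed

lemma finite_hists: "finite (hists n m)"
  unfolding hists_def using finite_lists_length_eq[of "{..<n}" m] by simp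



theorem lemma1:
  fixes n :: nat and lam \<gamma> s :: real and t :: nat
    and X :: "nat \<Rightarrow> real^'k^'d"
    and \<phi> :: "nat \<Rightarrow> real^'k \<Rightarrow> real" and g :: "real^'d \<Rightarrow> real"
    and NP :: "real^'k \<Rightarrow> real" and NP' :: "real^'d \<Rightarrow> real"
    and grad_gs :: "real^'d \<Rightarrow> real^'d"
    and \<alpha> :: "nat list \<Rightarrow> nat \<Rightarrow> real^'k"
    and v :: "nat list \<Rightarrow> real^'d"
    and u :: "nat list \<Rightarrow> nat \<Rightarrow> real^'k"
  defines "ND \<equiv> dual_norm NP" and "ND' \<equiv> dual_norm NP'"
    and "w \<equiv> (\<lambda>h. grad_gs (v h))"
  assumes n_pos: "n \<ge> 1" and lam_pos: "lam > 0" and gam: "\<gamma> \<ge> 0"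
    and normP: "is_norm NP" and normP': "is_norm NP'"
    and phi_convex: "\<And>i. i < n \<Longrightarrow> convex_on UNIV (\<phi> i)"
    and g_convex: "convex_on UNIV g"
    and g_strong: "strongly_convex_wrt NP' 1 (\<lambda>x. ereal (g x))"
    and gs_finite: "\<And>y. conj g y \<noteq> \<infinity>"
    and gs_deriv: "\<And>y. ((\<lambda>z. real_of_ereal (conj g z)) has_derivative (\<lambda>h. grad_gs y \<bullet> h)) (at y)"
    and gs_cont: "continuous_on UNIV grad_gs"
    and phis_strong: "\<And>i. i < n \<Longrightarrow> strongly_convex_wrt ND \<gamma> (conj (\<phi> i))"
    \<comment> \<open>Prox-SDCA, Option I; the state after the history h of random indices\<close>
    and alpha0: "\<And>j. \<alpha> [] j = 0"
    and v0: "v [] = 0"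
    and alpha_other: "\<And>h i j. set h \<subseteq> {..<n} \<Longrightarrow> i < n \<Longrightarrow> j \<noteq> i \<Longrightarrow>
                        \<alpha> (h @ [i]) j = \<alpha> h j"
    and alpha_argmax: "\<And>h i \<Delta>. set h \<subseteq> {..<n} \<Longrightarrow> i < n \<Longrightarrow>
        - conj (\<phi> i) (- (\<alpha> h i + \<Delta>)) - ereal (w h \<bullet> (X i *v \<Delta>))
            - ereal (1 / (2 * lam * real n) * (ND' (X i *v \<Delta>))\<^sup>2)
        \<le> - conj (\<phi> i) (- (\<alpha> h i + (\<alpha> (h @ [i]) i - \<alpha> h i)))
            - ereal (w h \<bullet> (X i *v (\<alpha> (h @ [i]) i - \<alpha> h i)))
            - ereal (1 / (2 * lam * real n) * (ND' (X i *v (\<alpha> (h @ [i]) i - \<alpha> h i)))\<^sup>2)"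
    and v_step: "\<And>h i. set h \<subseteq> {..<n} \<Longrightarrow> i < n \<Longrightarrow>
        v (h @ [i]) = v h + (1 / (lam * real n)) *\<^sub>R (X i *v (\<alpha> (h @ [i]) i - \<alpha> h i))"
    and u_sub: "\<And>h i. set h \<subseteq> {..<n} \<Longrightarrow> i < n \<Longrightarrow>
        - u h i \<in> subdiff (\<phi> i) (transpose (X i) *v w h)"
    and t_pos: "t \<ge> 1" and s_range: "0 \<le> s" "s \<le> 1"
  shows "expect_e n t (\<lambda>h. dual n lam \<phi> g X (\<alpha> h) - dual n lam \<phi> g X (\<alpha> (butlast h)))
    \<ge> ereal (s / real n) * expect_e n (t - 1)
          (\<lambda>h. ereal (primal n lam \<phi> g X (w h)) - dual n lam \<phi> g X (\<alpha> h))
      - ereal ((s / real n)\<^sup>2 *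
          ((1 / real n) * (\<Sum>i<n. ((op_norm ND ND' (X i))\<^sup>2 - \<gamma> * (1 - s) * lam * real n / s)
                 * expect n (t - 1) (\<lambda>h. (ND (u h i - \<alpha> h i))\<^sup>2)))
          / (2 * lam))"
proof -
  have nP: "is_norm NP" and nP': "is_norm NP'" using normP normP' .
  have n0: "real n > 0" using n_pos by simp
  define c where "c h j = conj (\<phi> j) (- \<alpha> h j)" for h j
  define cr where "cr h j = real_of_ereal (c h j)" for h j
  define Gr where "Gr y = real_of_ereal (conj g y)" for y
  have cG: "conj g y = ereal (Gr y)" for y
    using gs_finite[of y] conj_not_minf[of g y] unfolding Gr_def by (cases "conj g y") auto
  define fin where "fin h \<longleftrightarrow> (\<forall>j<n. c h j \<noteq> \<infinity>)" for h
  have cfin: "c h j = ereal (cr h j)" if "fin h" "j < n" for h j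
    using that conj_not_minf[of "\<phi> j" "- \<alpha> h j"] unfolding fin_def cr_def c_def
    by (cases "c h j") (auto simp: c_def)
  have V: "v h = (1 / (lam * real n)) *\<^sub>R (\<Sum>j<n. X j *v \<alpha> h j)" if "set h \<subseteq> {..<n}" for h
    using that
  proof (induction h rule: rev_induct)
    case Nil then show ?case using v0 alpha0 by simp
  next
    case (snoc i h)
    then have h: "set h \<subseteq> {..<n}" and i: "i < n" by auto
    have "(\<Sum>j<n. X j *v \<alpha> (h @ [i]) j) = (\<Sum>j<n. X j *v \<alpha> h j + (if j = i then X i *v (\<alpha> (h @ [i]) i - \<alpha> h i) else 0))"
      by (rule sum.cong) (auto simp: alpha_other[OF h i] algebra_simps)
    also have "\<dots> = (\<Sum>j<n. X j *v \<alpha> h j) + X i *v (\<alpha> (h @ [i]) i - \<alpha> h i)"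
      using i by (simp add: sum.distrib)
    finally show ?case using v_step[OF h i] snoc.IH[OF h] by (simp add: scaleR_add_right)
  qed
  have gF: "Gr (v h) = w h \<bullet> v h - g (w h)"
    "\<And>\<delta>. Gr (v h + \<delta>) \<le> Gr (v h) + w h \<bullet> \<delta> + (ND' \<delta>)\<^sup>2 / 2" for h
    using g_facts[OF nP' g_convex g_strong gs_finite gs_deriv[of "v h"]]
    unfolding Gr_def w_def ND'_def by auto
  define Dr where "Dr h = (1 / real n) * (\<Sum>j<n. - cr h j) - lam * Gr (v h)" for h
  have Dfin: "dual n lam \<phi> g X (\<alpha> h) = ereal (Dr h)" if "set h \<subseteq> {..<n}" "fin h" for h
  proof -
    have "(\<Sum>j<n. - conj (\<phi> j) (- \<alpha> h j)) = (\<Sum>j<n. ereal (- cr h j))"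
      by (rule sum.cong) (use cfin[OF that(2)] in \<open>auto simp: c_def\<close>)
    then show ?thesis unfolding dual_def Dr_def using V[OF that(1)] cG by simp
  qed
  have Dinf: "dual n lam \<phi> g X (\<alpha> h) = -\<infinity>" if nf: "\<not> fin h" for h
  proof -
    obtain j where j: "j < n" "c h j = \<infinity>" using nf unfolding fin_def by auto
    let ?S = "(\<Sum>j<n. - conj (\<phi> j) (- \<alpha> h j))"
    have "?S \<noteq> \<infinity>" unfolding sum_Pinfty using conj_not_minf by (auto simp: ereal_uminus_eq_reorder)
    moreover have "\<bar>?S\<bar> = \<infinity>" unfolding sum_Inf using j unfolding c_def by force
    ultimately have "?S = -\<infinity>" by auto
    then show ?thesis unfolding dual_def using n0 cG by simp
  qed
  define op where "op i = op_norm ND ND' (X i)" for i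
  define Nq where "Nq h i = (ND (u h i - \<alpha> h i))\<^sup>2" for h i
  define coef where "coef i = (op i)\<^sup>2 - \<gamma> * (1 - s) * lam * real n / s" for i
  define a where "a h i = transpose (X i) *v w h" for h i
  define T where "T h i = cr h i + \<phi> i (a h i) + w h \<bullet> (X i *v \<alpha> h i)" for h i
  have ND_nP: "ND = dual_norm NP" and ND'_nP: "ND' = dual_norm NP'" using ND_def ND'_def by auto
  have step: "fin (h @ [i]) \<and>
      Dr (h @ [i]) - Dr h \<ge> (s / real n) * T h i - (s / real n)\<^sup>2 * (coef i * Nq h i) / (2 * lam)"
    if h: "set h \<subseteq> {..<n}" and fh: "fin h" and i: "i < n" for h i
  proof -
    define h' where "h' = h @ [i]"
    define \<Delta>a where "\<Delta>a = \<alpha> h' i - \<alpha> h i"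
    have h'set: "set h' \<subseteq> {..<n}" using h i unfolding h'_def by auto
    have oth: "\<alpha> h' j = \<alpha> h j" if "j \<noteq> i" for j using alpha_other[OF h i that] unfolding h'_def .
    have am: "\<And>\<Delta>. - conj (\<phi> i) (- (\<alpha> h i + \<Delta>)) - ereal (w h \<bullet> (X i *v \<Delta>))
            - ereal (1 / (2 * lam * real n) * (ND' (X i *v \<Delta>))\<^sup>2)
        \<le> - c h' i - ereal (w h \<bullet> (X i *v \<Delta>a)) - ereal (1 / (2 * lam * real n) * (ND' (X i *v \<Delta>a))\<^sup>2)"
      using alpha_argmax[OF h i] unfolding c_def \<Delta>a_def h'_def by simp
    have ci: "c h i = ereal (cr h i)" using cfin[OF fh i] .
    have c'fin: "c h' i \<noteq> \<infinity>"
    proof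
      assume inf: "c h' i = \<infinity>"
      have "- c h i - ereal (w h \<bullet> (X i *v 0)) - ereal (1 / (2 * lam * real n) * (ND' (X i *v 0))\<^sup>2)
          \<le> - c h' i - ereal (w h \<bullet> (X i *v \<Delta>a)) - ereal (1 / (2 * lam * real n) * (ND' (X i *v \<Delta>a))\<^sup>2)"
        using am[of 0] unfolding c_def by simp
      then show False using inf ci by simp
    qed
    have fh': "fin h'" unfolding fin_def
    proof (intro allI impI)
      fix j assume "j < n"
      show "c h' j \<noteq> \<infinity>"
      proof (cases "j = i")
        case True then show ?thesis using c'fin by simp
      next
        case False then show ?thesis using fh \<open>j < n\<close> oth[OF False] unfolding fin_def c_def by simp
      qed
    qed
    have c'i: "c h' i = ereal (cr h' i)" using cfin[OF fh' i] .
    have sumdiff: "(\<Sum>j<n. - cr h' j) = (\<Sum>j<n. - cr h j) + cr h i - cr h' i"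
    proof -
      have "(\<Sum>j<n. - cr h' j) = (\<Sum>j<n. - cr h j + (if j = i then cr h i - cr h' i else 0))"
        by (rule sum.cong) (auto simp: cr_def c_def oth)
      also have "\<dots> = (\<Sum>j<n. - cr h j) + (cr h i - cr h' i)" using i by (subst sum.distrib) simp
      finally show ?thesis by simp
    qed
    define \<delta> where "\<delta> = (1 / (lam * real n)) *\<^sub>R (X i *v \<Delta>a)"
    have vh': "v h' = v h + \<delta>" using v_step[OF h i] unfolding \<delta>_def \<Delta>a_def h'_def by simp
    have Gup: "Gr (v h') \<le> Gr (v h) + w h \<bullet> \<delta> + (ND' \<delta>)\<^sup>2 / 2" using gF(2)[of h \<delta>] vh' by simp
    have ndd: "ND' \<delta> = (1 / (lam * real n)) * ND' (X i *v \<Delta>a)"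
      unfolding \<delta>_def ND'_nP using dual_scale[OF nP'] lam_pos n0 by simp
    have wd: "w h \<bullet> \<delta> = (1 / (lam * real n)) * (w h \<bullet> (X i *v \<Delta>a))" unfolding \<delta>_def by simp
    have lamG: "lam * (Gr (v h') - Gr (v h)) \<le> (1 / real n) * (w h \<bullet> (X i *v \<Delta>a))
        + (1 / real n) * ((ND' (X i *v \<Delta>a))\<^sup>2 / (2 * lam * real n))"
    proof -
      have "lam * (Gr (v h') - Gr (v h)) \<le> lam * (w h \<bullet> \<delta> + (ND' \<delta>)\<^sup>2 / 2)"
        using Gup lam_pos by (simp add: mult_left_mono)
      also have "\<dots> = (1 / real n) * (w h \<bullet> (X i *v \<Delta>a))
        + (1 / real n) * ((ND' (X i *v \<Delta>a))\<^sup>2 / (2 * lam * real n))"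
        unfolding wd ndd using lam_pos n0 by (simp add: field_simps power2_eq_square)
      finally show ?thesis .
    qed
    have D1: "Dr h' - Dr h \<ge> (1 / real n) * (cr h i - cr h' i - w h \<bullet> (X i *v \<Delta>a)
        - (ND' (X i *v \<Delta>a))\<^sup>2 / (2 * lam * real n))"
      using lamG unfolding Dr_def sumdiff by (simp add: algebra_simps)
    define z where "z = u h i - \<alpha> h i"
    define \<Delta> where "\<Delta> = s *\<^sub>R z"
    have subg: "- u h i \<in> subdiff (\<phi> i) (a h i)" using u_sub[OF h i] unfolding a_def .
    have cu: "conj (\<phi> i) (- u h i) = ereal (a h i \<bullet> (- u h i) - \<phi> i (a h i))"
      by (rule conj_subdiff[OF subg])
    have sc: "conj (\<phi> i) (s *\<^sub>R (- u h i) + (1 - s) *\<^sub>R (- \<alpha> h i)) \<le>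
        ereal s * conj (\<phi> i) (- u h i) + ereal (1 - s) * conj (\<phi> i) (- \<alpha> h i)
        - ereal (\<gamma> * s * (1 - s) / 2 * (ND (- u h i - - \<alpha> h i))\<^sup>2)"
      using phis_strong[OF i] s_range unfolding strongly_convex_wrt_def by blast
    have vecid: "s *\<^sub>R (- u h i) + (1 - s) *\<^sub>R (- \<alpha> h i) = - (\<alpha> h i + \<Delta>)"
      unfolding \<Delta>_def z_def by (simp add: algebra_simps)
    have ndz: "ND (- u h i - - \<alpha> h i) = ND z"
    proof -
      have "- u h i - - \<alpha> h i = - z" unfolding z_def by simp
      then show ?thesis unfolding ND_nP using dual_minus[OF nP] by simp
    qed
    define K where "K = s * (a h i \<bullet> (- u h i) - \<phi> i (a h i)) + (1 - s) * cr h i - \<gamma> * s * (1 - s) / 2 * (ND z)\<^sup>2"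
    have cK: "conj (\<phi> i) (- (\<alpha> h i + \<Delta>)) \<le> ereal K"
      using sc unfolding vecid ndz cu unfolding K_def using ci unfolding c_def by simp
    obtain k0 where k0: "conj (\<phi> i) (- (\<alpha> h i + \<Delta>)) = ereal k0" "k0 \<le> K"
      using cK conj_not_minf[of "\<phi> i" "- (\<alpha> h i + \<Delta>)"]
      by (cases "conj (\<phi> i) (- (\<alpha> h i + \<Delta>))") auto
    have am2: "- k0 - w h \<bullet> (X i *v \<Delta>) - 1 / (2 * lam * real n) * (ND' (X i *v \<Delta>))\<^sup>2
        \<le> - cr h' i - w h \<bullet> (X i *v \<Delta>a) - 1 / (2 * lam * real n) * (ND' (X i *v \<Delta>a))\<^sup>2"
      using am[of \<Delta>] unfolding k0(1) c'i by simp
    have XD: "X i *v \<Delta> = s *\<^sub>R (X i *v z)" unfolding \<Delta>_def by (simp add: algebra_simps)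
    have ND'D: "ND' (X i *v \<Delta>) = s * ND' (X i *v z)"
      unfolding XD ND'_nP using dual_scale[OF nP'] s_range by simp
    have opb: "(ND' (X i *v z))\<^sup>2 \<le> (op i)\<^sup>2 * Nq h i"
    proof -
      have "ND' (X i *v z) \<le> op i * ND z" unfolding op_def ND_nP ND'_nP by (rule op_norm_bound(1)[OF nP nP'])
      moreover have "0 \<le> ND' (X i *v z)" unfolding ND'_nP by (rule dual_nonneg[OF nP'])
      ultimately have "(ND' (X i *v z))\<^sup>2 \<le> (op i * ND z)\<^sup>2" by (rule power_mono)
      then show ?thesis unfolding Nq_def z_def by (simp add: power_mult_distrib)
    qed
    have au: "a h i \<bullet> u h i = w h \<bullet> (X i *v u h i)" unfolding a_def by (rule inner_transpose)
    have lam_n: "2 * lam * real n > 0" using lam_pos n0 by simp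
    have bracket: "cr h i - cr h' i - w h \<bullet> (X i *v \<Delta>a) - (ND' (X i *v \<Delta>a))\<^sup>2 / (2 * lam * real n)
        \<ge> s * T h i + \<gamma> * s * (1 - s) / 2 * Nq h i - s\<^sup>2 * ((op i)\<^sup>2 * Nq h i) / (2 * lam * real n)"
    proof -
      have "cr h i - cr h' i - w h \<bullet> (X i *v \<Delta>a) - (ND' (X i *v \<Delta>a))\<^sup>2 / (2 * lam * real n)
          \<ge> cr h i - k0 - w h \<bullet> (X i *v \<Delta>) - (ND' (X i *v \<Delta>))\<^sup>2 / (2 * lam * real n)"
        using am2 by simp
      moreover have "(ND' (X i *v \<Delta>))\<^sup>2 / (2 * lam * real n) \<le> s\<^sup>2 * ((op i)\<^sup>2 * Nq h i) / (2 * lam * real n)"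
        unfolding ND'D using opb lam_n by (simp add: power_mult_distrib divide_right_mono mult_left_mono)
      moreover have "w h \<bullet> (X i *v \<Delta>) = s * (w h \<bullet> (X i *v u h i)) - s * (w h \<bullet> (X i *v \<alpha> h i))"
        unfolding XD z_def by (simp add: algebra_simps inner_diff_right)
      moreover have "cr h i - K = s * T h i + \<gamma> * s * (1 - s) / 2 * Nq h i + s * (w h \<bullet> (X i *v u h i)) - s * (w h \<bullet> (X i *v \<alpha> h i))"
        unfolding K_def T_def Nq_def z_def using au by (simp add: algebra_simps inner_minus_right)
      ultimately show ?thesis using k0(2) by linarith
    qed
    have fin_alg: "(1 / real n) * (s * T h i + \<gamma> * s * (1 - s) / 2 * Nq h i - s\<^sup>2 * ((op i)\<^sup>2 * Nq h i) / (2 * lam * real n))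
        = (s / real n) * T h i - (s / real n)\<^sup>2 * (coef i * Nq h i) / (2 * lam)"
    proof (cases "s = 0")
      case True then show ?thesis by simp
    next
      case False then show ?thesis unfolding coef_def using lam_pos n0
        by (simp add: field_simps power2_eq_square)
    qed
    have "Dr h' - Dr h \<ge> (s / real n) * T h i - (s / real n)\<^sup>2 * (coef i * Nq h i) / (2 * lam)"
      using D1 mult_left_mono[OF bracket, of "1 / real n"] n0 fin_alg by simp
    then show ?thesis using fh' unfolding h'_def by simp
  qed
  define F where "F h = dual n lam \<phi> g X (\<alpha> h) - dual n lam \<phi> g X (\<alpha> (butlast h))" for h
  define H where "H = hists n (t - 1)"
  have tS: "t = Suc (t - 1)" using t_pos by simp
  have Hset: "set h \<subseteq> {..<n}" if "h \<in> H" for h using that unfolding H_def hists_def by auto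
  have finH: "finite H" unfolding H_def by (rule finite_hists)
  have LHS: "expect_e n t F = ereal (1 / real n ^ t) * (\<Sum>h\<in>H. \<Sum>i<n. F (h @ [i]))"
    unfolding expect_e_def H_def by (subst (2) tS, subst hists_Suc_sum) simp
  have np: "1 / real n ^ t > 0" using n0 by simp
  show ?thesis
  proof (cases "\<forall>h\<in>H. fin h")
    case False
    then obtain h0 where h0: "h0 \<in> H" "\<not> fin h0" by auto
    have "F (h0 @ [0]) = \<infinity>" unfolding F_def using Dinf[OF h0(2)] by simp
    then have "(\<Sum>i<n. F (h0 @ [i])) = \<infinity>" unfolding sum_Pinfty using n_pos by force
    then have "(\<Sum>h\<in>H. \<Sum>i<n. F (h @ [i])) = \<infinity>" unfolding sum_Pinfty[of _ H] using finH h0(1) by blast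
    then have "expect_e n t F = \<infinity>" unfolding LHS using np by simp
    then show ?thesis unfolding F_def by simp
  next
    case True
    define M where "M = real n ^ (t - 1)"
    have M0: "M > 0" unfolding M_def using n0 by simp
    have nt: "real n ^ t = real n * M" unfolding M_def by (subst tS) simp
    define P where "P h = primal n lam \<phi> g X (w h)" for h
    have Fr: "F (h @ [i]) = ereal (Dr (h @ [i]) - Dr h)" if "h \<in> H" "i < n" for h i
    proof -
      have "set (h @ [i]) \<subseteq> {..<n}" using Hset[OF that(1)] that(2) by auto
      then show ?thesis unfolding F_def using Dfin Hset[OF that(1)] True that step[OF Hset[OF that(1)] _ that(2)] by simp
    qed
    have LHSr: "expect_e n t F = ereal ((\<Sum>h\<in>H. \<Sum>i<n. Dr (h @ [i]) - Dr h) / (real n * M))"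
    proof -
      have "(\<Sum>h\<in>H. \<Sum>i<n. F (h @ [i])) = (\<Sum>h\<in>H. \<Sum>i<n. ereal (Dr (h @ [i]) - Dr h))"
        by (intro sum.cong refl) (simp add: Fr)
      then show ?thesis unfolding LHS nt by simp
    qed
    have RHS1: "expect_e n (t - 1) (\<lambda>h. ereal (primal n lam \<phi> g X (w h)) - dual n lam \<phi> g X (\<alpha> h))
        = ereal ((\<Sum>h\<in>H. P h - Dr h) / M)"
    proof -
      have "(\<Sum>h\<in>H. ereal (primal n lam \<phi> g X (w h)) - dual n lam \<phi> g X (\<alpha> h)) = (\<Sum>h\<in>H. ereal (P h - Dr h))"
        by (intro sum.cong refl) (simp add: P_def Dfin Hset True)
      then show ?thesis unfolding expect_e_def H_def[symmetric] M_def by simp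
    qed
    have PD: "(\<Sum>i<n. T h i) = real n * (P h - Dr h)" if "h \<in> H" for h
    proof -
      have wv: "w h \<bullet> v h = (1 / (lam * real n)) * (\<Sum>i<n. w h \<bullet> (X i *v \<alpha> h i))"
        using V[OF Hset[OF that]] by (simp add: inner_sum_right)
      have "P h - Dr h = (1 / real n) * (\<Sum>i<n. \<phi> i (a h i)) + lam * g (w h) + (1 / real n) * (\<Sum>i<n. cr h i) + lam * Gr (v h)"
        unfolding P_def primal_def Dr_def a_def by (simp add: sum_negf)
      also have "\<dots> = (1 / real n) * (\<Sum>i<n. T h i)"
        unfolding gF(1) wv T_def using lam_pos n0 by (simp add: sum.distrib field_simps)
      finally show ?thesis using n0 by simp
    qed
    have perh: "(\<Sum>i<n. Dr (h @ [i]) - Dr h) \<ge> s * (P h - Dr h) - (s / real n)\<^sup>2 * (\<Sum>i<n. coef i * Nq h i) / (2 * lam)"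
      if "h \<in> H" for h
    proof -
      have "(\<Sum>i<n. Dr (h @ [i]) - Dr h) \<ge> (\<Sum>i<n. (s / real n) * T h i - (s / real n)\<^sup>2 * (coef i * Nq h i) / (2 * lam))"
        by (rule sum_mono) (use step[OF Hset[OF that] True[rule_format, OF that]] in simp)
      also have "(\<Sum>i<n. (s / real n) * T h i - (s / real n)\<^sup>2 * (coef i * Nq h i) / (2 * lam))
          = (s / real n) * (\<Sum>i<n. T h i) - (s / real n)\<^sup>2 * (\<Sum>i<n. coef i * Nq h i) / (2 * lam)"
        by (simp add: sum_subtractf sum_distrib_left sum_divide_distrib)
      also have "(s / real n) * (\<Sum>i<n. T h i) = s * (P h - Dr h)" using PD[OF that] n0 by simp
      finally show ?thesis .
    qed
    define SP where "SP = (\<Sum>h\<in>H. P h - Dr h)"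
    define SQ where "SQ = (\<Sum>h\<in>H. \<Sum>i<n. coef i * Nq h i)"
    have sumall: "(\<Sum>h\<in>H. \<Sum>i<n. Dr (h @ [i]) - Dr h) \<ge> s * SP - (s / real n)\<^sup>2 * SQ / (2 * lam)"
    proof -
      have "(\<Sum>h\<in>H. \<Sum>i<n. Dr (h @ [i]) - Dr h) \<ge> (\<Sum>h\<in>H. s * (P h - Dr h) - (s / real n)\<^sup>2 * (\<Sum>i<n. coef i * Nq h i) / (2 * lam))"
        by (rule sum_mono) (rule perh)
      also have "(\<Sum>h\<in>H. s * (P h - Dr h) - (s / real n)\<^sup>2 * (\<Sum>i<n. coef i * Nq h i) / (2 * lam)) = s * SP - (s / real n)\<^sup>2 * SQ / (2 * lam)"
        unfolding SP_def SQ_def by (simp add: sum_subtractf sum_distrib_left sum_divide_distrib right_diff_distrib)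
      finally show ?thesis .
    qed
    have EQ: "(\<Sum>i<n. ((op_norm ND ND' (X i))\<^sup>2 - \<gamma> * (1 - s) * lam * real n / s) * expect n (t - 1) (\<lambda>h. (ND (u h i - \<alpha> h i))\<^sup>2))
        = SQ / M"
    proof -
      have "(\<Sum>i<n. ((op_norm ND ND' (X i))\<^sup>2 - \<gamma> * (1 - s) * lam * real n / s) * expect n (t - 1) (\<lambda>h. (ND (u h i - \<alpha> h i))\<^sup>2))
          = (\<Sum>i<n. coef i * ((\<Sum>h\<in>H. Nq h i) / M))"
        unfolding coef_def op_def expect_def Nq_def H_def M_def by simp
      also have "\<dots> = (\<Sum>i<n. \<Sum>h\<in>H. coef i * Nq h i) / M"
        by (simp add: sum_divide_distrib sum_distrib_left)
      also have "\<dots> = SQ / M" unfolding SQ_def by (subst sum.swap) simp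
      finally show ?thesis .
    qed
    have real_ineq: "(\<Sum>h\<in>H. \<Sum>i<n. Dr (h @ [i]) - Dr h) / (real n * M)
        \<ge> (s / real n) * (SP / M) - (s / real n)\<^sup>2 * ((1 / real n) * (SQ / M)) / (2 * lam)"
    proof -
      have "(s * SP - (s / real n)\<^sup>2 * SQ / (2 * lam)) / (real n * M) = (s / real n) * (SP / M) - (s / real n)\<^sup>2 * ((1 / real n) * (SQ / M)) / (2 * lam)"
        using n0 M0 lam_pos by (simp add: field_simps)
      moreover have "(s * SP - (s / real n)\<^sup>2 * SQ / (2 * lam)) / (real n * M) \<le> (\<Sum>h\<in>H. \<Sum>i<n. Dr (h @ [i]) - Dr h) / (real n * M)"
        using sumall n0 M0 by (simp add: divide_right_mono)
      ultimately show ?thesis by simp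
    qed
    show ?thesis
      unfolding F_def[symmetric] LHSr RHS1 EQ SP_def[symmetric] using real_ineq by simp
  qed
qed


end
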